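(* Let $A$ be an alternative algebra over a field $F$ with unit element $1$, admitting a derivation with invertible values $d$. Then: (a) if $L\neq 0$ is a one-sided (left or right) ideal of $A$, then $d(L)\neq 0$; (b) every nonzero proper left (respectively right) ideal of $A$ is both a minimal and a maximal left (respectively right) ideal of $A$; (c) if $I$ is a proper two-sided ideal of $A$, then $I^2=0$; (d) if $\operatorname{char}F\neq 2$ (i.e. $2A\neq 0$), then $A$ is simple.
   Context: An algebra $A$ is alternative if $(x,x,y)=0$ and $(x,y,y)=0$ for all $x,y\in A$, where $(x,y,z)=(xy)z-x(yz)$. An element $a$ of a unital alternative algebra is invertible if there is $b$ with $ab=ba=1$; $U$ denotes the set of invertible elements. A derivation with invertible values of $A$ is a nonzero derivation $d$ of $A$ such that for every $x\in A$ either $d(x)\in U$ or $d(x)=0$. A proper ideal is one different from $A$. *)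

theory Defs
  imports Complex_Main
begin

definition assoc3 :: "('a \<Rightarrow> 'a \<Rightarrow> 'a::ab_group_add) \<Rightarrow> 'a \<Rightarrow> 'a \<Rightarrow> 'a \<Rightarrow> 'a" where
  "assoc3 mul x y z = mul (mul x y) z - mul x (mul y z)"

definition unital_alternative_algebra ::
  "('k::field \<Rightarrow> 'a::ab_group_add \<Rightarrow> 'a) \<Rightarrow> ('a \<Rightarrow> 'a \<Rightarrow> 'a) \<Rightarrow> 'a \<Rightarrow> bool" where
  "unital_alternative_algebra scale mul one \<longleftrightarrow>
     vector_space scale \<and>
     (\<forall>x y z. mul (x + y) z = mul x z + mul y z) \<and>
     (\<forall>x y z. mul x (y + z) = mul x y + mul x z) \<and>
     (\<forall>c x y. mul (scale c x) y = scale c (mul x y)) \<and>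
     (\<forall>c x y. mul x (scale c y) = scale c (mul x y)) \<and>
     (\<forall>x. mul one x = x \<and> mul x one = x) \<and>
     (\<forall>x y. assoc3 mul x x y = 0) \<and>
     (\<forall>x y. assoc3 mul x y y = 0)"

definition invertible_el :: "('a \<Rightarrow> 'a \<Rightarrow> 'a) \<Rightarrow> 'a \<Rightarrow> 'a \<Rightarrow> bool" where
  "invertible_el mul one a \<longleftrightarrow> (\<exists>b. mul a b = one \<and> mul b a = one)"

definition derivation ::
  "('k::field \<Rightarrow> 'a::ab_group_add \<Rightarrow> 'a) \<Rightarrow> ('a \<Rightarrow> 'a \<Rightarrow> 'a) \<Rightarrow> ('a \<Rightarrow> 'a) \<Rightarrow> bool" where
  "derivation scale mul d \<longleftrightarrow>
     (\<forall>x y. d (x + y) = d x + d y) \<and>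
     (\<forall>c x. d (scale c x) = scale c (d x)) \<and>
     (\<forall>x y. d (mul x y) = mul (d x) y + mul x (d y))"

definition derivation_inv_values ::
  "('k::field \<Rightarrow> 'a::ab_group_add \<Rightarrow> 'a) \<Rightarrow> ('a \<Rightarrow> 'a \<Rightarrow> 'a) \<Rightarrow> 'a \<Rightarrow> ('a \<Rightarrow> 'a) \<Rightarrow> bool" where
  "derivation_inv_values scale mul one d \<longleftrightarrow>
     derivation scale mul d \<and> (\<exists>x. d x \<noteq> 0) \<and>
     (\<forall>x. d x = 0 \<or> invertible_el mul one (d x))"

definition subspace_of :: "('k::field \<Rightarrow> 'a::ab_group_add \<Rightarrow> 'a) \<Rightarrow> 'a set \<Rightarrow> bool" where
  "subspace_of scale S \<longleftrightarrow> 0 \<in> S \<and> (\<forall>x\<in>S. \<forall>y\<in>S. x + y \<in> S) \<and> (\<forall>c. \<forall>x\<in>S. scale c x \<in> S)"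

definition left_ideal ::
  "('k::field \<Rightarrow> 'a::ab_group_add \<Rightarrow> 'a) \<Rightarrow> ('a \<Rightarrow> 'a \<Rightarrow> 'a) \<Rightarrow> 'a set \<Rightarrow> bool" where
  "left_ideal scale mul L \<longleftrightarrow> subspace_of scale L \<and> (\<forall>a. \<forall>x\<in>L. mul a x \<in> L)"

definition right_ideal ::
  "('k::field \<Rightarrow> 'a::ab_group_add \<Rightarrow> 'a) \<Rightarrow> ('a \<Rightarrow> 'a \<Rightarrow> 'a) \<Rightarrow> 'a set \<Rightarrow> bool" where
  "right_ideal scale mul L \<longleftrightarrow> subspace_of scale L \<and> (\<forall>a. \<forall>x\<in>L. mul x a \<in> L)"

definition two_sided_ideal ::
  "('k::field \<Rightarrow> 'a::ab_group_add \<Rightarrow> 'a) \<Rightarrow> ('a \<Rightarrow> 'a \<Rightarrow> 'a) \<Rightarrow> 'a set \<Rightarrow> bool" where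
  "two_sided_ideal scale mul I \<longleftrightarrow> left_ideal scale mul I \<and> right_ideal scale mul I"

definition minimal_among :: "('a::zero set \<Rightarrow> bool) \<Rightarrow> 'a set \<Rightarrow> bool" where
  "minimal_among P L \<longleftrightarrow> P L \<and> L \<noteq> {0} \<and> (\<forall>L'. P L' \<and> L' \<subseteq> L \<and> L' \<noteq> {0} \<longrightarrow> L' = L)"

definition maximal_among :: "('a set \<Rightarrow> bool) \<Rightarrow> 'a set \<Rightarrow> bool" where
  "maximal_among P L \<longleftrightarrow> P L \<and> L \<noteq> UNIV \<and> (\<forall>L'. P L' \<and> L \<subseteq> L' \<and> L' \<noteq> UNIV \<longrightarrow> L' = L)"

text \<open>I^2 = 0: all products of two elements of I vanish (I^2 is spanned by them).\<close>
definition square_zero :: "('a \<Rightarrow> 'a \<Rightarrow> 'a::zero) \<Rightarrow> 'a set \<Rightarrow> bool" where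
  "square_zero mul I \<longleftrightarrow> (\<forall>x\<in>I. \<forall>y\<in>I. mul x y = 0)"

definition simple_algebra ::
  "('k::field \<Rightarrow> 'a::ab_group_add \<Rightarrow> 'a) \<Rightarrow> ('a \<Rightarrow> 'a \<Rightarrow> 'a) \<Rightarrow> bool" where
  "simple_algebra scale mul \<longleftrightarrow> (\<exists>x y. mul x y \<noteq> 0) \<and>
     (\<forall>I. two_sided_ideal scale mul I \<longrightarrow> I = {0} \<or> I = UNIV)"

end

theory Submission
  imports Defs
begin

locale altalg =
  fixes mul :: "'a::ab_group_add \<Rightarrow> 'a \<Rightarrow> 'a" and one :: 'a
  assumes ldist: "\<And>x y z. mul (x + y) z = mul x z + mul y z"
    and rdist: "\<And>x y z. mul x (y + z) = mul x y + mul x z"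
    and onel: "\<And>x. mul one x = x" and oner: "\<And>x. mul x one = x"
    and altl: "\<And>x y. assoc3 mul x x y = 0"
    and altr: "\<And>x y. assoc3 mul x y y = 0"
begin

lemma mul0l[simp]: "mul 0 x = 0"
  using ldist[of 0 0 x] by simp
lemma mul0r[simp]: "mul x 0 = 0"
  using rdist[of x 0 0] by simp
lemma mulml: "mul (- x) y = - mul x y"
  using ldist[of "-x" x y] by (simp add: eq_neg_iff_add_eq_0)
lemma mulmr: "mul y (- x) = - mul y x"
  using rdist[of y "-x" x] by (simp add: eq_neg_iff_add_eq_0)
lemma muldl: "mul (x - y) z = mul x z - mul y z"
  using ldist[of x "-y" z] by (simp add: mulml)
lemma muldr: "mul z (x - y) = mul z x - mul z y"
  using rdist[of z x "-y"] by (simp add: mulmr)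

abbreviation as where "as \<equiv> assoc3 mul"

lemma teich: "as (mul w x) y z - as w (mul x y) z + as w x (mul y z)
   = mul w (as x y z) + mul (as w x y) z"
  by (simp add: assoc3_def muldl muldr algebra_simps)

lemma add1: "as (x + y) z w = as x z w + as y z w"
  by (simp add: assoc3_def ldist rdist algebra_simps)
lemma add2: "as z (x + y) w = as z x w + as z y w"
  by (simp add: assoc3_def ldist rdist algebra_simps)
lemma add3: "as z w (x + y) = as z w x + as z w y"
  by (simp add: assoc3_def ldist rdist algebra_simps)

lemma skl: "as x y z = - as y x z"
proof -
  have "as (x+y) (x+y) z = 0" by (rule altl)
  then have "as x x z + as y x z + (as x y z + as y y z) = 0" unfolding add1 add2 .
  then have "as x y z + as y x z = 0" by (simp add: altl add.commute)
  then show ?thesis by (simp add: eq_neg_iff_add_eq_0)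
qed
lemma skr: "as x y z = - as x z y"
proof -
  have "as x (y+z) (y+z) = 0" by (rule altr)
  then have "as x y y + as x z y + (as x y z + as x z z) = 0" unfolding add3 add2 .
  then have "as x y z + as x z y = 0" by (simp add: altr add.commute)
  then show ?thesis by (simp add: eq_neg_iff_add_eq_0)
qed
lemma cyc: "as x y z = as y z x"
  using skl[of x y z] skr[of y x z] by simp
lemma alt_mid: "as x y x = 0"
  using skr[of x y x] altl[of x y] by simp

lemma PQ: "as x (mul x y) z = mul (as x y z) x \<and> as x (mul y x) z = mul x (as x y z)"
proof -
  define J where "J = as x y z"
  have i: "as (mul x x) y z = as x (mul x y) z + mul x J"
    using teich[of x x y z] by (simp add: altl J_def algebra_simps)
  have i2: "as (mul x x) z y = as x (mul x z) y + mul x (as x z y)"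
    using teich[of x x z y] by (simp add: altl algebra_simps)
  have Pa: "as x (mul x z) y = - as x (mul x y) z"
  proof -
    have "as (mul x x) z y = - as (mul x x) y z" by (rule skr)
    moreover have "as x z y = - J" unfolding J_def by (rule skr)
    ultimately show ?thesis using i i2 by (simp add: mulmr algebra_simps eq_neg_iff_add_eq_0)
  qed
  have ii: "as (mul y x) x z - as y (mul x x) z + as y x (mul x z) = 0"
    using teich[of y x x z] by (simp add: altl altr)
  have e1: "as y (mul x x) z = - as (mul x x) y z" by (rule skl)
  have e2: "as (mul y x) x z = - as x (mul y x) z"
    using cyc[of "mul y x" x z] skr[of x z "mul y x"] by simp
  have e3: "as y x (mul x z) = as x (mul x z) y"
    using cyc[of y x "mul x z"] by simp
  have Q: "as x (mul y x) z = mul x J"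
    using ii e1 e2 e3 Pa i by (simp add: algebra_simps)
  have iii: "as (mul z y) x x - as z (mul y x) x + as z y (mul x x)
      = mul z (as y x x) + mul (as z y x) x"
    by (rule teich)
  have f1: "as z (mul y x) x = - as x (mul y x) z"
    using cyc[of x z "mul y x"] skr[of x z "mul y x"] by simp
  have f2: "as z y (mul x x) = - as (mul x x) y z"
    using cyc[of "mul x x" z y] skr[of "mul x x" z y] by simp
  have f3: "as z y x = - J"
    unfolding J_def using skl[of z y x] cyc[of x y z] by simp
  have sq: "as (mul x x) y z = mul x J + mul J x"
    using iii f1 f2 f3 Q by (simp add: altr mulml algebra_simps)
  have P: "as x (mul x y) z = mul J x" using i sq by simp
  show ?thesis using P Q J_def by simp
qed

lemma one_as: "as a one z = 0"
  by (simp add: assoc3_def onel oner)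

lemma inv_as: assumes ab: "mul a b = one" and ba: "mul b a = one"
  shows "as a b z = 0"
proof -
  define g where "g = as a b z"
  have "as a (mul a b) z = mul g a" using PQ[of a b z] g_def by simp
  then have ga: "mul g a = 0" using ab one_as by simp
  have "as a (mul b a) z = mul a g" using PQ[of a b z] g_def by simp
  then have ag: "mul a g = 0" using ba one_as by simp
  have "as b (mul b a) z = mul (as b a z) b" using PQ[of b a z] by simp
  moreover have "as b a z = - g" using skl[of b a z] g_def by simp
  ultimately have gb: "mul g b = 0" using ba one_as by (simp add: mulml)
  have "as b (mul a b) z = mul b (as b a z)" using PQ[of b a z] by simp
  then have bg: "mul b g = 0" using ab one_as \<open>as b a z = - g\<close> by (simp add: mulmr)
  have "as a b g = - as a g b" by (rule skr)
  also have "\<dots> = 0" by (simp add: assoc3_def ag gb)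
  finally have fg: "as a b g = 0" .
  have "g = mul (mul a b) g" using ab onel by simp
  also have "\<dots> = as a b g + mul a (mul b g)" by (simp add: assoc3_def)
  also have "\<dots> = 0" using fg bg by simp
  finally show ?thesis using g_def by simp
qed

lemma inv_cancel: assumes ab: "mul a b = one" and ba: "mul b a = one"
  shows "mul b (mul a z) = z" "mul (mul z a) b = z"
proof -
  have "as b a z = 0" using inv_as[OF ab ba] skl[of a b z] by simp
  then show "mul b (mul a z) = z" using ba by (simp add: assoc3_def onel)
  have "as z a b = 0" using inv_as[OF ab ba] cyc[of z a b] by simp
  then show "mul (mul z a) b = z" using ab by (simp add: assoc3_def oner)
qed

end

theorem lemma1p3:
  fixes scale :: "'k::field \<Rightarrow> 'a::ab_group_add \<Rightarrow> 'a"
    and mul :: "'a \<Rightarrow> 'a \<Rightarrow> 'a" and one :: 'a and d :: "'a \<Rightarrow> 'a"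
  assumes A: "unital_alternative_algebra scale mul one"
    and D: "derivation_inv_values scale mul one d"
  shows "(\<forall>L. (left_ideal scale mul L \<or> right_ideal scale mul L) \<and> L \<noteq> {0} \<longrightarrow> d ` L \<noteq> {0})
    \<and> (\<forall>L. left_ideal scale mul L \<and> L \<noteq> {0} \<and> L \<noteq> UNIV \<longrightarrow>
           minimal_among (left_ideal scale mul) L \<and> maximal_among (left_ideal scale mul) L)
    \<and> (\<forall>L. right_ideal scale mul L \<and> L \<noteq> {0} \<and> L \<noteq> UNIV \<longrightarrow>
           minimal_among (right_ideal scale mul) L \<and> maximal_among (right_ideal scale mul) L)
    \<and> (\<forall>I. two_sided_ideal scale mul I \<and> I \<noteq> UNIV \<longrightarrow> square_zero mul I)
    \<and> ((2::'k) \<noteq> 0 \<longrightarrow> simple_algebra scale mul)"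
proof -
  have VS: "vector_space scale"
    and ldist: "\<And>x y z. mul (x + y) z = mul x z + mul y z"
    and rdist: "\<And>x y z. mul x (y + z) = mul x y + mul x z"
    and onel: "\<And>x. mul one x = x" and oner: "\<And>x. mul x one = x"
    and altl: "\<And>x y. assoc3 mul x x y = 0" and altr: "\<And>x y. assoc3 mul x y y = 0"
    using A unfolding unital_alternative_algebra_def by auto
  interpret altalg mul one
    by unfold_locales (simp_all add: ldist rdist onel oner altl altr)
  interpret vs: vector_space scale by (rule VS)
  have dadd: "\<And>x y. d (x + y) = d x + d y"
    and dmul: "\<And>x y. d (mul x y) = mul (d x) y + mul x (d y)"
    and dinv: "\<And>x. d x = 0 \<or> invertible_el mul one (d x)"
    using D unfolding derivation_inv_values_def derivation_def by auto
  obtain a0 where a0: "d a0 \<noteq> 0" using D unfolding derivation_inv_values_def by auto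
  have d0: "d 0 = 0" using dadd[of 0 0] by simp
  obtain b0 where ab0: "mul (d a0) b0 = one" "mul b0 (d a0) = one"
    using dinv[of a0] a0 unfolding invertible_el_def by auto
  have cl: "\<And>z. mul (d a0) z = 0 \<Longrightarrow> z = 0"
    using inv_cancel(1)[OF ab0] by (metis mul0r)
  have killL: "\<And>z. d z = 0 \<Longrightarrow> d (mul a0 z) = 0 \<Longrightarrow> z = 0"
  proof -
    fix z assume "d z = 0" "d (mul a0 z) = 0"
    then have "mul (d a0) z = 0" using dmul[of a0 z] by simp
    then show "z = 0" by (rule cl)
  qed
  have cr: "\<And>z. mul z (d a0) = 0 \<Longrightarrow> z = 0"
    using inv_cancel(2)[OF ab0] by (metis mul0l)
  have killR: "\<And>z. d z = 0 \<Longrightarrow> d (mul z a0) = 0 \<Longrightarrow> z = 0"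
  proof -
    fix z assume "d z = 0" "d (mul z a0) = 0"
    then have "mul z (d a0) = 0" using dmul[of z a0] by simp
    then show "z = 0" by (rule cr)
  qed
  have L0: "\<And>L. left_ideal scale mul L \<Longrightarrow> 0 \<in> L"
    and Ladd: "\<And>L x y. left_ideal scale mul L \<Longrightarrow> x \<in> L \<Longrightarrow> y \<in> L \<Longrightarrow> x + y \<in> L"
    and Lmul: "\<And>L a x. left_ideal scale mul L \<Longrightarrow> x \<in> L \<Longrightarrow> mul a x \<in> L"
    unfolding left_ideal_def subspace_of_def by auto
  have R0: "\<And>L. right_ideal scale mul L \<Longrightarrow> 0 \<in> L"
    and Radd: "\<And>L x y. right_ideal scale mul L \<Longrightarrow> x \<in> L \<Longrightarrow> y \<in> L \<Longrightarrow> x + y \<in> L"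
    and Rmul: "\<And>L a x. right_ideal scale mul L \<Longrightarrow> x \<in> L \<Longrightarrow> mul x a \<in> L"
    unfolding right_ideal_def subspace_of_def by auto
  have Lneg: "\<And>L x. left_ideal scale mul L \<Longrightarrow> x \<in> L \<Longrightarrow> - x \<in> L"
    using Lmul[of _ _ "- one"] by (metis mulml onel)
  have Rneg: "\<And>L x. right_ideal scale mul L \<Longrightarrow> x \<in> L \<Longrightarrow> - x \<in> L"
    using Rmul[of _ _ "- one"] by (metis mulmr oner)
  have dzL: "\<And>L y. left_ideal scale mul L \<Longrightarrow> L \<noteq> UNIV \<Longrightarrow> d y \<in> L \<Longrightarrow> d y = 0"
  proof (rule ccontr)
    fix L y assume L: "left_ideal scale mul L" "L \<noteq> UNIV" "d y \<in> L" "d y \<noteq> 0"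
    then obtain v where v: "mul (d y) v = one" "mul v (d y) = one"
      using dinv[of y] unfolding invertible_el_def by auto
    have "\<And>w. w \<in> L"
    proof -
      fix w have "mul (mul w v) (d y) = w" using inv_cancel(2)[OF v(2) v(1)] by simp
      then show "w \<in> L" using Lmul[OF L(1) L(3)] by metis
    qed
    then show False using L(2) by auto
  qed
  have dzR: "\<And>L y. right_ideal scale mul L \<Longrightarrow> L \<noteq> UNIV \<Longrightarrow> d y \<in> L \<Longrightarrow> d y = 0"
  proof (rule ccontr)
    fix L y assume L: "right_ideal scale mul L" "L \<noteq> UNIV" "d y \<in> L" "d y \<noteq> 0"
    then obtain v where v: "mul (d y) v = one" "mul v (d y) = one"
      using dinv[of y] unfolding invertible_el_def by auto
    have "\<And>w. w \<in> L"
    proof -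
      fix w have "mul (d y) (mul v w) = w" using inv_cancel(1)[OF v(2) v(1)] by simp
      then show "w \<in> L" using Rmul[OF L(1) L(3)] by metis
    qed
    then show False using L(2) by auto
  qed
  have nz: "\<And>L. 0 \<in> L \<Longrightarrow> L \<noteq> {0} \<Longrightarrow> \<exists>x\<in>L. x \<noteq> 0" by blast
  have aL: "\<And>L. left_ideal scale mul L \<Longrightarrow> L \<noteq> {0} \<Longrightarrow> \<exists>y\<in>L. d y \<noteq> 0"
  proof (rule ccontr)
    fix L assume L: "left_ideal scale mul L" "L \<noteq> {0}" "\<not> (\<exists>y\<in>L. d y \<noteq> 0)"
    obtain x where x: "x \<in> L" "x \<noteq> 0" using nz[OF L0[OF L(1)] L(2)] by blast
    have "mul a0 x \<in> L" using Lmul[OF L(1) x(1)] .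
    then have "x = 0" using killL x(1) L(3) by blast
    then show False using x(2) by simp
  qed
  have aR: "\<And>L. right_ideal scale mul L \<Longrightarrow> L \<noteq> {0} \<Longrightarrow> \<exists>y\<in>L. d y \<noteq> 0"
  proof (rule ccontr)
    fix L assume L: "right_ideal scale mul L" "L \<noteq> {0}" "\<not> (\<exists>y\<in>L. d y \<noteq> 0)"
    obtain x where x: "x \<in> L" "x \<noteq> 0" using nz[OF R0[OF L(1)] L(2)] by blast
    have "mul x a0 \<in> L" using Rmul[OF L(1) x(1)] .
    then have "x = 0" using killR x(1) L(3) by blast
    then show False using x(2) by simp
  qed
  have spanL: "\<And>L x c. left_ideal scale mul L \<Longrightarrow> x \<in> L \<Longrightarrow> d x \<noteq> 0 \<Longrightarrow>
      \<exists>l\<in>L. \<exists>w\<in>L. c = d l - w"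
  proof -
    fix L x c assume L: "left_ideal scale mul L" "x \<in> L" "d x \<noteq> 0"
    then obtain v where v: "mul (d x) v = one" "mul v (d x) = one"
      using dinv[of x] unfolding invertible_el_def by auto
    define a where "a = mul c v"
    have e: "mul a (d x) = c" unfolding a_def using inv_cancel(2)[OF v(2) v(1)] by simp
    have "d (mul a x) = mul (d a) x + c" using dmul[of a x] e by simp
    then have "c = d (mul a x) - mul (d a) x" by simp
    moreover have "mul a x \<in> L" "mul (d a) x \<in> L" using Lmul[OF L(1) L(2)] by auto
    ultimately show "\<exists>l\<in>L. \<exists>w\<in>L. c = d l - w" by blast
  qed
  have spanR: "\<And>L x c. right_ideal scale mul L \<Longrightarrow> x \<in> L \<Longrightarrow> d x \<noteq> 0 \<Longrightarrow>
      \<exists>l\<in>L. \<exists>w\<in>L. c = d l - w"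
  proof -
    fix L x c assume L: "right_ideal scale mul L" "x \<in> L" "d x \<noteq> 0"
    then obtain v where v: "mul (d x) v = one" "mul v (d x) = one"
      using dinv[of x] unfolding invertible_el_def by auto
    define a where "a = mul v c"
    have e: "mul (d x) a = c" unfolding a_def using inv_cancel(1)[OF v(2) v(1)] by simp
    have "d (mul x a) = c + mul x (d a)" using dmul[of x a] e by simp
    then have "c = d (mul x a) - mul x (d a)" by simp
    moreover have "mul x a \<in> L" "mul x (d a) \<in> L" using Rmul[OF L(1) L(2)] by auto
    ultimately show "\<exists>l\<in>L. \<exists>w\<in>L. c = d l - w" by blast
  qed
  have eqL: "\<And>L1 L2. left_ideal scale mul L1 \<Longrightarrow> left_ideal scale mul L2 \<Longrightarrow> L1 \<subseteq> L2 \<Longrightarrow>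
      L1 \<noteq> {0} \<Longrightarrow> L2 \<noteq> UNIV \<Longrightarrow> L1 = L2"
  proof -
    fix L1 L2 assume H: "left_ideal scale mul L1" "left_ideal scale mul L2" "L1 \<subseteq> L2"
      "L1 \<noteq> {0}" "L2 \<noteq> UNIV"
    obtain x where x: "x \<in> L1" "d x \<noteq> 0" using aL[OF H(1) H(4)] by blast
    have "L2 \<subseteq> L1"
    proof
      fix y assume y: "y \<in> L2"
      obtain l w where lw: "l \<in> L1" "w \<in> L1" "y = d l - w" using spanL[OF H(1) x, of y] by blast
      have "d l = y + w" using lw(3) by simp
      then have "d l \<in> L2" using Ladd[OF H(2) y] lw(2) H(3) by auto
      then have "d l = 0" using dzL[OF H(2) H(5)] by blast
      then have "y = - w" using lw(3) by simp
      then show "y \<in> L1" using Lneg[OF H(1) lw(2)] by simp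
    qed
    then show "L1 = L2" using H(3) by blast
  qed
  have eqR: "\<And>L1 L2. right_ideal scale mul L1 \<Longrightarrow> right_ideal scale mul L2 \<Longrightarrow> L1 \<subseteq> L2 \<Longrightarrow>
      L1 \<noteq> {0} \<Longrightarrow> L2 \<noteq> UNIV \<Longrightarrow> L1 = L2"
  proof -
    fix L1 L2 assume H: "right_ideal scale mul L1" "right_ideal scale mul L2" "L1 \<subseteq> L2"
      "L1 \<noteq> {0}" "L2 \<noteq> UNIV"
    obtain x where x: "x \<in> L1" "d x \<noteq> 0" using aR[OF H(1) H(4)] by blast
    have "L2 \<subseteq> L1"
    proof
      fix y assume y: "y \<in> L2"
      obtain l w where lw: "l \<in> L1" "w \<in> L1" "y = d l - w" using spanR[OF H(1) x, of y] by blast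
      have "d l = y + w" using lw(3) by simp
      then have "d l \<in> L2" using Radd[OF H(2) y] lw(2) H(3) by auto
      then have "d l = 0" using dzR[OF H(2) H(5)] by blast
      then have "y = - w" using lw(3) by simp
      then show "y \<in> L1" using Rneg[OF H(1) lw(2)] by simp
    qed
    then show "L1 = L2" using H(3) by blast
  qed
  have PA: "\<forall>L. (left_ideal scale mul L \<or> right_ideal scale mul L) \<and> L \<noteq> {0} \<longrightarrow> d ` L \<noteq> {0}"
  proof (intro allI impI)
    fix L assume H: "(left_ideal scale mul L \<or> right_ideal scale mul L) \<and> L \<noteq> {0}"
    then obtain y where "y \<in> L" "d y \<noteq> 0" using aL aR by blast
    then show "d ` L \<noteq> {0}" by blast
  qed
  have PB: "\<forall>L. left_ideal scale mul L \<and> L \<noteq> {0} \<and> L \<noteq> UNIV \<longrightarrow>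
           minimal_among (left_ideal scale mul) L \<and> maximal_among (left_ideal scale mul) L"
    unfolding minimal_among_def maximal_among_def
  proof (intro allI impI conjI)
    fix L assume H: "left_ideal scale mul L \<and> L \<noteq> {0} \<and> L \<noteq> UNIV"
    show "left_ideal scale mul L" "L \<noteq> {0}" "left_ideal scale mul L" "L \<noteq> UNIV" using H by auto
  next
    fix L L' assume H: "left_ideal scale mul L \<and> L \<noteq> {0} \<and> L \<noteq> UNIV"
      and H': "left_ideal scale mul L' \<and> L' \<subseteq> L \<and> L' \<noteq> {0}"
    show "L' = L" using eqL H H' by blast
  next
    fix L L' assume H: "left_ideal scale mul L \<and> L \<noteq> {0} \<and> L \<noteq> UNIV"
      and H': "left_ideal scale mul L' \<and> L \<subseteq> L' \<and> L' \<noteq> UNIV"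
    show "L' = L" using eqL[of L L'] H H' by auto
  qed
  have PB2: "\<forall>L. right_ideal scale mul L \<and> L \<noteq> {0} \<and> L \<noteq> UNIV \<longrightarrow>
           minimal_among (right_ideal scale mul) L \<and> maximal_among (right_ideal scale mul) L"
    unfolding minimal_among_def maximal_among_def
  proof (intro allI impI conjI)
    fix L assume H: "right_ideal scale mul L \<and> L \<noteq> {0} \<and> L \<noteq> UNIV"
    show "right_ideal scale mul L" "L \<noteq> {0}" "right_ideal scale mul L" "L \<noteq> UNIV" using H by auto
  next
    fix L L' assume H: "right_ideal scale mul L \<and> L \<noteq> {0} \<and> L \<noteq> UNIV"
      and H': "right_ideal scale mul L' \<and> L' \<subseteq> L \<and> L' \<noteq> {0}"
    show "L' = L" using eqR H H' by blast
  next
    fix L L' assume H: "right_ideal scale mul L \<and> L \<noteq> {0} \<and> L \<noteq> UNIV"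
      and H': "right_ideal scale mul L' \<and> L \<subseteq> L' \<and> L' \<noteq> UNIV"
    show "L' = L" using eqR[of L L'] H H' by auto
  qed
  have PC: "\<forall>I. two_sided_ideal scale mul I \<and> I \<noteq> UNIV \<longrightarrow> square_zero mul I"
    unfolding square_zero_def
  proof (intro allI impI ballI)
    fix I x y assume H: "two_sided_ideal scale mul I \<and> I \<noteq> UNIV" and xy: "x \<in> I" "y \<in> I"
    have Il: "left_ideal scale mul I" and Ir: "right_ideal scale mul I" and Ip: "I \<noteq> UNIV"
      using H unfolding two_sided_ideal_def by auto
    define z where "z = mul x y"
    have zI: "z \<in> I" unfolding z_def using Lmul[OF Il xy(2)] .
    have "d z = mul (d x) y + mul x (d y)" unfolding z_def by (rule dmul)
    moreover have "mul (d x) y \<in> I" "mul x (d y) \<in> I" using Lmul[OF Il xy(2)] Rmul[OF Ir xy(1)] by auto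
    ultimately have "d z \<in> I" using Ladd[OF Il] by simp
    then have dz: "d z = 0" using dzL[OF Il Ip] by blast
    have "d (mul a0 z) = mul (d a0) z" using dmul[of a0 z] dz by simp
    then have "d (mul a0 z) \<in> I" using Lmul[OF Il zI] by simp
    then have "d (mul a0 z) = 0" using dzL[OF Il Ip] by blast
    then show "mul x y = 0" using killL dz z_def by blast
  qed
  have PD: "(2::'k) \<noteq> 0 \<longrightarrow> simple_algebra scale mul"
    unfolding simple_algebra_def
  proof (intro impI conjI allI)
    assume two: "(2::'k) \<noteq> 0"
    have "one \<noteq> 0"
    proof
      assume "one = 0"
      then have "a0 = 0" using onel[of a0] by simp
      then show False using a0 d0 by simp
    qed
    then show "\<exists>x y. mul x y \<noteq> 0" using onel[of one] by metis
    fix I assume two': "(2::'k) \<noteq> 0" and T: "two_sided_ideal scale mul I"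
    have Il: "left_ideal scale mul I" and Ir: "right_ideal scale mul I"
      using T unfolding two_sided_ideal_def by auto
    show "I = {0} \<or> I = UNIV"
    proof (rule ccontr)
      assume "\<not> (I = {0} \<or> I = UNIV)"
      then have Iz: "I \<noteq> {0}" and Ip: "I \<noteq> UNIV" by auto
      have sq: "\<And>p q. p \<in> I \<Longrightarrow> q \<in> I \<Longrightarrow> mul p q = 0"
        using PC T Ip unfolding square_zero_def by blast
      obtain x where x: "x \<in> I" "d x \<noteq> 0" using aL[OF Il Iz] by blast
      obtain v where v: "mul (d x) v = one" "mul v (d x) = one"
        using dinv[of x] x(2) unfolding invertible_el_def by auto
      have vx: "mul v x \<in> I" using Lmul[OF Il x(1)] .
      have "d (mul x (mul v x)) = 0" using sq[OF x(1) vx] d0 by simp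
      moreover have "d (mul x (mul v x)) = mul (d x) (mul v x) + mul x (d (mul v x))" by (rule dmul)
      moreover have "mul (d x) (mul v x) = x" using inv_cancel(1)[OF v(2) v(1)] by simp
      moreover have "d (mul v x) = mul (d v) x + one" using dmul[of v x] v(2) by simp
      moreover have "mul x (mul (d v) x + one) = x"
        using rdist sq[OF x(1) Lmul[OF Il x(1)]] oner by simp
      ultimately have xx: "x + x = 0" by simp
      have "scale 2 x = x + x" using vs.scale_left_distrib[of 1 1 x] by (simp add: one_add_one)
      then have "scale 2 x = 0" using xx by simp
      then have "x = 0" using two' by simp
      then show False using x(2) d0 by simp
    qed
  qed
  show ?thesis using PA PB PB2 PC PD by blast
qed

end
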